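(* Let $V_0$ be a nonlocal vertex algebra such that every $V_0$-module is completely reducible. Regard $V=V_0[[\hbar]]$ as an $\hbar$-adic nonlocal vertex algebra. Then every $V$-module is completely reducible, i.e. for every $V$-module $W$ and every submodule $W'\subseteq W$ there is a submodule $W''\subseteq W$ with $W=W'\oplus W''$.
   Context: Let $\hbar$ be a formal variable. A $\mathbb{C}[[\hbar]]$-module is topologically free if it is of the form $W_0[[\hbar]]$ for a complex vector space $W_0$. An ordinary nonlocal vertex algebra $V_0$ makes $V_0[[\hbar]]$ an $\hbar$-adic nonlocal vertex algebra by $\mathbb{C}[[\hbar]]$-linear extension. A module over an $\hbar$-adic nonlocal vertex algebra is by definition topologically free. For a $\mathbb{C}[[\hbar]]$-submodule $U$ of a topologically free module $W$, set $[U]=\{w\in W:\hbar^n w\in U\text{ for some }n\ge 1\}$ and let $\overline{U}$ be its $\hbar$-adic closure. Convention: a submodule of a module $W$ over an $\hbar$-adic nonlocal vertex algebra $V$ is a $\mathbb{C}[[\hbar]]$-submodule $W_1$ stable under all operators $u_n$ ($u\in V$) such that $\overline{W_1}=W_1$ and $[W_1]=W_1$. A $V_0$-module is completely reducible if every submodule has a complementary submodule. *)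

theory Defs
  imports Complex_Main "HOL-Library.Function_Algebras"
begin

text \<open>A vertex operator Y(u,x)w = sum_n u_n w x^(-n-1) is encoded as
  Y u w n = u_n w, for n an integer.  Scalars are complex numbers, given
  by an explicit scalar multiplication sc.\<close>

definition fsum :: "(nat \<Rightarrow> 'a::comm_monoid_add) \<Rightarrow> 'a" where
  "fsum f = sum f {j. f j \<noteq> 0}"

definition lsubspace :: "(complex \<Rightarrow> 'a \<Rightarrow> 'a) \<Rightarrow> 'a::ab_group_add set \<Rightarrow> bool" where
  "lsubspace sc S \<longleftrightarrow> 0 \<in> S \<and> (\<forall>a\<in>S. \<forall>b\<in>S. a + b \<in> S) \<and> (\<forall>c. \<forall>a\<in>S. sc c a \<in> S)"

text \<open>Coefficient of x0^p x2^q in (x0+x2)^l Y_W(u,x0+x2) Y_W(v,x2) w,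
  where (x0+x2)^k is expanded in nonnegative powers of x2.\<close>
definition wa_lhs ::
  "(complex \<Rightarrow> 'w \<Rightarrow> 'w) \<Rightarrow> ('v \<Rightarrow> 'w \<Rightarrow> int \<Rightarrow> 'w) \<Rightarrow> 'v \<Rightarrow> 'v \<Rightarrow> 'w
    \<Rightarrow> nat \<Rightarrow> int \<Rightarrow> int \<Rightarrow> 'w::ab_group_add" where
  "wa_lhs scW YW u v w l p q =
     fsum (\<lambda>j. scW ((of_int (p + int j)) gchoose j)
                  (YW u (YW v w (int j - q - 1)) (int l - 1 - int j - p)))"

text \<open>Coefficient of x0^p x2^q in (x0+x2)^l Y_W(Y(u,x0)v,x2) w.\<close>
definition wa_rhs ::
  "(complex \<Rightarrow> 'w \<Rightarrow> 'w) \<Rightarrow> ('v \<Rightarrow> 'v \<Rightarrow> int \<Rightarrow> 'v) \<Rightarrow> ('v \<Rightarrow> 'w \<Rightarrow> int \<Rightarrow> 'w)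
    \<Rightarrow> 'v \<Rightarrow> 'v \<Rightarrow> 'w \<Rightarrow> nat \<Rightarrow> int \<Rightarrow> int \<Rightarrow> 'w::ab_group_add" where
  "wa_rhs scW YV YW u v w l p q =
     (\<Sum>i\<le>l. scW (of_nat (l choose i)) (YW (YV u v (int l - int i - 1 - p)) w (int i - q - 1)))"

definition nlva_module ::
  "(complex \<Rightarrow> 'v \<Rightarrow> 'v::ab_group_add) \<Rightarrow> (complex \<Rightarrow> 'w \<Rightarrow> 'w::ab_group_add) \<Rightarrow> 'v set \<Rightarrow> ('v \<Rightarrow> 'v \<Rightarrow> int \<Rightarrow> 'v) \<Rightarrow> 'v
    \<Rightarrow> 'w set \<Rightarrow> ('v \<Rightarrow> 'w \<Rightarrow> int \<Rightarrow> 'w) \<Rightarrow> bool" where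
  "nlva_module scV scW V YV vac W YW \<longleftrightarrow>
     lsubspace scW W \<and> vac \<in> V \<and>
     (\<forall>u\<in>V. \<forall>w\<in>W. \<forall>n. YW u w n \<in> W) \<and>
     (\<forall>u\<in>V. \<forall>u'\<in>V. \<forall>w\<in>W. \<forall>n. YW (u + u') w n = YW u w n + YW u' w n) \<and>
     (\<forall>c. \<forall>u\<in>V. \<forall>w\<in>W. \<forall>n. YW (scV c u) w n = scW c (YW u w n)) \<and>
     (\<forall>u\<in>V. \<forall>w\<in>W. \<forall>w'\<in>W. \<forall>n. YW u (w + w') n = YW u w n + YW u w' n) \<and>
     (\<forall>c. \<forall>u\<in>V. \<forall>w\<in>W. \<forall>n. YW u (scW c w) n = scW c (YW u w n)) \<and>
     (\<forall>u\<in>V. \<forall>w\<in>W. \<exists>N. \<forall>n\<ge>N. YW u w n = 0) \<and>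
     (\<forall>w\<in>W. \<forall>n. YW vac w n = (if n = -1 then w else 0)) \<and>
     (\<forall>u\<in>V. \<forall>v\<in>V. \<forall>w\<in>W. \<exists>l. \<forall>p q.
         wa_lhs scW YW u v w l p q = wa_rhs scW YV YW u v w l p q)"

definition nlva ::
  "(complex \<Rightarrow> 'v \<Rightarrow> 'v) \<Rightarrow> 'v::ab_group_add set \<Rightarrow> ('v \<Rightarrow> 'v \<Rightarrow> int \<Rightarrow> 'v) \<Rightarrow> 'v \<Rightarrow> bool" where
  "nlva sc V Y vac \<longleftrightarrow>
     lsubspace sc V \<and> nlva_module sc sc V Y vac V Y \<and>
     (\<forall>u\<in>V. (\<forall>n\<ge>0. Y u vac n = 0) \<and> Y u vac (-1) = u)"

definition nlva_submodule ::
  "(complex \<Rightarrow> 'w \<Rightarrow> 'w) \<Rightarrow> 'v set \<Rightarrow> ('v \<Rightarrow> 'w \<Rightarrow> int \<Rightarrow> 'w) \<Rightarrow> 'w::ab_group_add set \<Rightarrow> 'w set \<Rightarrow> bool" where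
  "nlva_submodule scW V YW W W1 \<longleftrightarrow>
     lsubspace scW W1 \<and> W1 \<subseteq> W \<and> (\<forall>u\<in>V. \<forall>w\<in>W1. \<forall>n. YW u w n \<in> W1)"

definition completely_reducible ::
  "(complex \<Rightarrow> 'w \<Rightarrow> 'w) \<Rightarrow> 'v set \<Rightarrow> ('v \<Rightarrow> 'w \<Rightarrow> int \<Rightarrow> 'w) \<Rightarrow> 'w::ab_group_add set \<Rightarrow> bool" where
  "completely_reducible scW V YW W \<longleftrightarrow>
     (\<forall>W1. nlva_submodule scW V YW W W1 \<longrightarrow>
        (\<exists>W2. nlva_submodule scW V YW W W2 \<and> W1 \<inter> W2 = {0} \<and>
              W = {a + b | a b. a \<in> W1 \<and> b \<in> W2}))"

section \<open>h-adic objects: W0[[h]] is encoded as nat => W0 (coefficient of h^k)\<close>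

definition pscale :: "(complex \<Rightarrow> 'a \<Rightarrow> 'a) \<Rightarrow> complex \<Rightarrow> (nat \<Rightarrow> 'a) \<Rightarrow> nat \<Rightarrow> 'a" where
  "pscale sc c w = (\<lambda>i. sc c (w i))"

definition hact :: "(complex \<Rightarrow> 'a \<Rightarrow> 'a) \<Rightarrow> (nat \<Rightarrow> complex) \<Rightarrow> (nat \<Rightarrow> 'a) \<Rightarrow> nat \<Rightarrow> 'a::comm_monoid_add" where
  "hact sc f w = (\<lambda>k. \<Sum>i\<le>k. sc (f i) (w (k - i)))"

definition hpow :: "nat \<Rightarrow> (nat \<Rightarrow> 'a) \<Rightarrow> nat \<Rightarrow> 'a::zero" where
  "hpow n w = (\<lambda>i. if i < n then 0 else w (i - n))"

text \<open>canonical representative of the class of w modulo h^k\<close>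
definition trunc :: "nat \<Rightarrow> (nat \<Rightarrow> 'a) \<Rightarrow> nat \<Rightarrow> 'a::zero" where
  "trunc k w = (\<lambda>i. if i < k then w i else 0)"

definition hYV :: "('v \<Rightarrow> 'v \<Rightarrow> int \<Rightarrow> 'v) \<Rightarrow> (nat \<Rightarrow> 'v) \<Rightarrow> (nat \<Rightarrow> 'v) \<Rightarrow> int \<Rightarrow> nat \<Rightarrow> 'v::comm_monoid_add" where
  "hYV Y0 u v n = (\<lambda>k. \<Sum>a\<le>k. Y0 (u a) (v (k - a)) n)"

definition hvac :: "'v \<Rightarrow> nat \<Rightarrow> 'v::zero" where
  "hvac vac0 = (\<lambda>i. if i = 0 then vac0 else 0)"

definition hbelow :: "nat \<Rightarrow> (nat \<Rightarrow> 'a::zero) set" where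
  "hbelow k = {w. \<forall>i\<ge>k. w i = 0}"

text \<open>A module for the h-adic nonlocal vertex algebra V0[[h]] on the topologically
  free module W0[[h]]: a C[[h]]-bilinear YW such that for every k,
  W/h^kW is a V/h^kV-module (Li's definition).\<close>
definition hadic_module ::
  "(complex \<Rightarrow> 'v \<Rightarrow> 'v::ab_group_add) \<Rightarrow> (complex \<Rightarrow> 'w \<Rightarrow> 'w::ab_group_add) \<Rightarrow> ('v \<Rightarrow> 'v \<Rightarrow> int \<Rightarrow> 'v) \<Rightarrow> 'v
    \<Rightarrow> ((nat \<Rightarrow> 'v) \<Rightarrow> (nat \<Rightarrow> 'w) \<Rightarrow> int \<Rightarrow> (nat \<Rightarrow> 'w)) \<Rightarrow> bool" where
  "hadic_module sc0V sc0W Y0 vac0 YW \<longleftrightarrow>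
     (\<forall>u u' w n. YW (u + u') w n = YW u w n + YW u' w n) \<and>
     (\<forall>f u w n. YW (hact sc0V f u) w n = hact sc0W f (YW u w n)) \<and>
     (\<forall>u w w' n. YW u (w + w') n = YW u w n + YW u w' n) \<and>
     (\<forall>f u w n. YW u (hact sc0W f w) n = hact sc0W f (YW u w n)) \<and>
     (\<forall>k. nlva_module (pscale sc0V) (pscale sc0W)
            (hbelow k) (\<lambda>u v n. trunc k (hYV Y0 u v n)) (trunc k (hvac vac0))
            (hbelow k) (\<lambda>u w n. trunc k (YW u w n)))"

definition hclosure :: "(nat \<Rightarrow> 'a::zero) set \<Rightarrow> (nat \<Rightarrow> 'a) set" where
  "hclosure U = {w. \<forall>k. \<exists>w1\<in>U. trunc k w = trunc k w1}"

definition hsat :: "(nat \<Rightarrow> 'a::zero) set \<Rightarrow> (nat \<Rightarrow> 'a) set" where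
  "hsat U = {w. \<exists>n\<ge>1. hpow n w \<in> U}"

definition hsubmodule ::
  "(complex \<Rightarrow> 'w \<Rightarrow> 'w) \<Rightarrow> ((nat \<Rightarrow> 'v) \<Rightarrow> (nat \<Rightarrow> 'w) \<Rightarrow> int \<Rightarrow> (nat \<Rightarrow> 'w))
     \<Rightarrow> (nat \<Rightarrow> 'w::ab_group_add) set \<Rightarrow> bool" where
  "hsubmodule sc0W YW W1 \<longleftrightarrow>
     0 \<in> W1 \<and> (\<forall>a\<in>W1. \<forall>b\<in>W1. a + b \<in> W1) \<and> (\<forall>f. \<forall>a\<in>W1. hact sc0W f a \<in> W1) \<and>
     (\<forall>u. \<forall>w\<in>W1. \<forall>n. YW u w n \<in> W1) \<and>
     hclosure W1 = W1 \<and> hsat W1 = W1"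

definition hadic_completely_reducible ::
  "(complex \<Rightarrow> 'w \<Rightarrow> 'w::ab_group_add) \<Rightarrow> ((nat \<Rightarrow> 'v) \<Rightarrow> (nat \<Rightarrow> 'w) \<Rightarrow> int \<Rightarrow> (nat \<Rightarrow> 'w)) \<Rightarrow> bool" where
  "hadic_completely_reducible sc0W YW \<longleftrightarrow>
     (\<forall>W1. hsubmodule sc0W YW W1 \<longrightarrow>
        (\<exists>W2. hsubmodule sc0W YW W2 \<and> W1 \<inter> W2 = {0} \<and>
              (UNIV :: (nat \<Rightarrow> 'w) set) = {a + b | a b. a \<in> W1 \<and> b \<in> W2}))"

end

theory Submission
  imports Defs
begin

lemma trunc_add: "trunc k (a + b) = trunc k a + trunc k (b::nat\<Rightarrow>'a::monoid_add)"
  by (auto simp: trunc_def)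
lemma trunc_diff: "trunc k (a - b) = trunc k a - trunc k (b::nat\<Rightarrow>'a::group_add)"
  by (auto simp: trunc_def)
lemma trunc_zero[simp]: "trunc k 0 = 0"
  by (auto simp: trunc_def)
lemma trunc_0[simp]: "trunc 0 x = 0"
  by (auto simp: trunc_def)
lemma trunc_trunc: "k \<le> n \<Longrightarrow> trunc k (trunc n x) = trunc k x"
  by (auto simp: trunc_def)
lemma trunc_trunc2: "n \<le> k \<Longrightarrow> trunc k (trunc n x) = trunc n x"
  by (auto simp: trunc_def)
lemma hbelow_iff: "x \<in> hbelow k \<longleftrightarrow> trunc k x = x"
  by (auto simp: trunc_def hbelow_def fun_eq_iff)
lemma trunc_in_hbelow[simp]: "trunc k x \<in> hbelow k"
  by (auto simp: trunc_def hbelow_def)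
lemma hbelow_0: "hbelow 0 = {0}"
  by (auto simp: hbelow_def)
lemma trunc_hpow: "trunc k (hpow k x) = 0"
  by (auto simp: trunc_def hpow_def)
lemma decomp: "(x::nat\<Rightarrow>'a::monoid_add) = trunc k x + hpow k (\<lambda>i. x (i+k))"
  by (auto simp: trunc_def hpow_def fun_eq_iff)
lemma trunc_eq_all: "(\<forall>k. trunc k x = trunc k y) \<Longrightarrow> x = y"
proof
  fix i assume "\<forall>k. trunc k x = trunc k y"
  then have "trunc (Suc i) x i = trunc (Suc i) y i" by simp
  then show "x i = y i" by (simp add: trunc_def)
qed

locale cmod = module sc for sc :: "complex \<Rightarrow> 'b::ab_group_add \<Rightarrow> 'b"
begin

lemma hact_delta: "hact sc (\<lambda>i. if i = j then 1 else 0) x = hpow j x"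
proof
  fix k
  show "hact sc (\<lambda>i. if i = j then 1 else 0) x k = hpow j x k"
  proof (cases "j \<le> k")
    case True
    have "(\<Sum>i\<le>k. sc (if i = j then 1 else 0) (x (k - i))) = (\<Sum>i\<in>{j}. sc (if i = j then 1 else 0) (x (k - i)))"
      by (rule sum.mono_neutral_right) (use True in auto)
    then show ?thesis using True by (simp add: hact_def hpow_def)
  next
    case False
    then show ?thesis by (simp add: hact_def hpow_def)
  qed
qed

lemma hact_const: "hact sc (\<lambda>i. if i = 0 then c else 0) x = pscale sc c x"
proof
  fix k
  have "(\<Sum>i\<le>k. sc (if i = 0 then c else 0) (x (k - i))) = (\<Sum>i\<in>{0}. sc (if i = 0 then c else 0) (x (k - i)))"
    by (rule sum.mono_neutral_right) auto
  then show "hact sc (\<lambda>i. if i = 0 then c else 0) x k = pscale sc c x k"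
    by (simp add: hact_def pscale_def)
qed

lemma hact_add: "hact sc f (a + b) = hact sc f a + hact sc f b"
  by (auto simp: hact_def fun_eq_iff scale_right_distrib sum.distrib)

lemma trunc_hact: "trunc k (hact sc f x) = trunc k (hact sc f (trunc k x))"
  by (auto simp: trunc_def hact_def fun_eq_iff intro!: sum.cong)

lemma pscale_add: "pscale sc c (a + b) = pscale sc c a + pscale sc c b"
  by (auto simp: pscale_def scale_right_distrib)
lemma trunc_pscale: "trunc k (pscale sc c x) = pscale sc c (trunc k x)"
  by (auto simp: trunc_def pscale_def)
lemma pscale_zero[simp]: "pscale sc c 0 = 0"
  by (auto simp: pscale_def)
lemma pscale_minus1: "pscale sc (-1) x = - x"
  by (auto simp: pscale_def)

lemma hact_split:
  assumes "x \<in> hbelow n"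
  shows "trunc n (hact sc f x) = pscale sc (f 0) x +
     trunc n (hact sc (\<lambda>i. if i = 1 then 1 else 0) (trunc n (hact sc (\<lambda>i. f (Suc i)) x)))"
proof
  fix i
  have xz: "\<And>j. j \<ge> n \<Longrightarrow> x j = 0" using assms by (auto simp: hbelow_def)
  show "trunc n (hact sc f x) i = (pscale sc (f 0) x +
     trunc n (hact sc (\<lambda>i. if i = 1 then 1 else 0) (trunc n (hact sc (\<lambda>i. f (Suc i)) x)))) i"
  proof (cases "i < n")
    case False then show ?thesis by (simp add: trunc_def pscale_def xz hact_delta)
  next
    case True
    show ?thesis
    proof (cases i)
      case 0 then show ?thesis using True by (simp add: trunc_def pscale_def hact_delta hact_def hpow_def)
    next
      case (Suc i')
      have "hact sc f x i = sc (f 0) (x i) + (\<Sum>j\<le>i'. sc (f (Suc j)) (x (i' - j)))"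
        unfolding hact_def Suc sum.atMost_Suc_shift by simp
      then show ?thesis using True Suc unfolding hact_delta by (simp add: trunc_def pscale_def hpow_def hact_def)
    qed
  qed
qed

end

locale ctx = W: cmod sc0W + V: cmod sc0V
  for sc0W :: "complex \<Rightarrow> 'w::ab_group_add \<Rightarrow> 'w" and sc0V :: "complex \<Rightarrow> 'v::ab_group_add \<Rightarrow> 'v" +
  fixes Y0 :: "'v \<Rightarrow> 'v \<Rightarrow> int \<Rightarrow> 'v" and vac0 :: 'v
    and YW :: "(nat \<Rightarrow> 'v) \<Rightarrow> (nat \<Rightarrow> 'w) \<Rightarrow> int \<Rightarrow> (nat \<Rightarrow> 'w)"
  assumes nlva: "nlva sc0V UNIV Y0 vac0"
    and cr: "\<forall>(M :: (nat \<Rightarrow> 'w) set) YM.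
                  nlva_module sc0V (pscale sc0W) UNIV Y0 vac0 M YM \<longrightarrow>
                  completely_reducible (pscale sc0W) UNIV YM M"
    and hm: "hadic_module sc0V sc0W Y0 vac0 YW"
begin

lemma YW_addl: "YW (u + u') w n = YW u w n + YW u' w n" using hm by (simp add: hadic_module_def)
lemma YW_addr: "YW u (w + w') n = YW u w n + YW u w' n" using hm by (simp add: hadic_module_def)
lemma YW_hactl: "YW (hact sc0V f u) w n = hact sc0W f (YW u w n)" using hm by (simp add: hadic_module_def)
lemma YW_hactr: "YW u (hact sc0W f w) n = hact sc0W f (YW u w n)" using hm by (simp add: hadic_module_def)
lemma level: "nlva_module (pscale sc0V) (pscale sc0W)
            (hbelow k) (\<lambda>u v n. trunc k (hYV Y0 u v n)) (trunc k (hvac vac0))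
            (hbelow k) (\<lambda>u w n. trunc k (YW u w n))" using hm by (simp add: hadic_module_def)

lemma YW_0r[simp]: "YW u 0 n = 0"
  using YW_addr[of u 0 0 n] by simp
lemma YW_0l[simp]: "YW 0 w n = 0"
  using YW_addl[of 0 0 w n] by simp

lemma YW_trunc_r: "trunc k (YW u w m) = trunc k (YW u (trunc k w) m)"
proof -
  have "YW u w m = YW u (trunc k w + hact sc0W (\<lambda>i. if i = k then 1 else 0) (\<lambda>i. w (i+k))) m"
    using decomp[of w k] by (simp add: W.hact_delta)
  also have "\<dots> = YW u (trunc k w) m + hpow k (YW u (\<lambda>i. w (i+k)) m)"
    by (subst YW_addr, subst YW_hactr, simp only: W.hact_delta)
  finally show ?thesis by (simp add: trunc_add trunc_hpow)
qed

lemma YW_trunc_l: "trunc k (YW u w m) = trunc k (YW (trunc k u) w m)"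
proof -
  have "YW u w m = YW (trunc k u + hact sc0V (\<lambda>i. if i = k then 1 else 0) (\<lambda>i. u (i+k))) w m"
    using decomp[of u k] by (simp add: V.hact_delta)
  also have "\<dots> = YW (trunc k u) w m + hpow k (YW (\<lambda>i. u (i+k)) w m)"
    by (subst YW_addl, subst YW_hactl, simp only: W.hact_delta)
  finally show ?thesis by (simp add: trunc_add trunc_hpow)
qed

lemma YW_trunc: "trunc k (YW u w m) = trunc k (YW (trunc k u) (trunc k w) m)"
  using YW_trunc_l YW_trunc_r by metis

lemma Y0_0r[simp]: "Y0 u 0 n = 0"
proof -
  have "\<forall>u w w' n. Y0 u (w + w') n = Y0 u w n + Y0 u w' n" using nlva by (simp add: nlva_def nlva_module_def)
  then have "Y0 u (0 + 0) n = Y0 u 0 n + Y0 u 0 n" by blast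
  then show ?thesis by simp
qed
lemma Y0_0l[simp]: "Y0 0 v n = 0"
proof -
  have "\<forall>u u' w n. Y0 (u + u') w n = Y0 u w n + Y0 u' w n" using nlva by (simp add: nlva_def nlva_module_def)
  then have "Y0 (0 + 0) v n = Y0 0 v n + Y0 0 v n" by blast
  then show ?thesis by simp
qed

definition YM :: "nat \<Rightarrow> 'v \<Rightarrow> (nat \<Rightarrow> 'w) \<Rightarrow> int \<Rightarrow> (nat \<Rightarrow> 'w)" where
  "YM k u w m = trunc k (YW (hvac u) w m)"

lemma YM_eq: "YM k u w m = trunc k (YW (trunc k (hvac u)) w m)"
  unfolding YM_def using YW_trunc_l by metis

lemma hYV_hvac: "trunc k (hYV Y0 (trunc k (hvac u)) (trunc k (hvac v)) i) = trunc k (hvac (Y0 u v i))"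
proof
  fix t
  show "trunc k (hYV Y0 (trunc k (hvac u)) (trunc k (hvac v)) i) t = trunc k (hvac (Y0 u v i)) t"
  proof (cases "t < k")
    case True
    show ?thesis
    proof (cases t)
      case 0 then show ?thesis using True by (simp add: trunc_def hYV_def hvac_def)
    next
      case (Suc t')
      have "(\<Sum>a\<le>t. Y0 (trunc k (hvac u) a) (trunc k (hvac v) (t - a)) i) = 0"
        by (rule sum.neutral) (use Suc in \<open>auto simp: trunc_def hvac_def\<close>)
      then show ?thesis using True Suc by (simp add: trunc_def hYV_def hvac_def)
    qed
  qed (simp add: trunc_def)
qed

lemma YM_module: "nlva_module sc0V (pscale sc0W) UNIV Y0 vac0 (hbelow k) (YM k)"
proof -
  let ?YL = "\<lambda>u w n. trunc k (YW u w n)"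
  let ?e = "\<lambda>u::'v. trunc k (hvac u)"
  have L: "nlva_module (pscale sc0V) (pscale sc0W) (hbelow k) (\<lambda>u v n. trunc k (hYV Y0 u v n)) (trunc k (hvac vac0))
            (hbelow k) ?YL" by (rule level)
  have YMe: "YM k u = ?YL (?e u)" for u by (auto simp: fun_eq_iff YM_eq)
  have sub: "lsubspace (pscale sc0W) (hbelow k)" using L by (simp add: nlva_module_def)
  have c1: "\<forall>u\<in>UNIV. \<forall>w\<in>hbelow k. \<forall>n. YM k u w n \<in> hbelow k" by (simp add: YM_def)
  have c2: "\<forall>u\<in>UNIV. \<forall>u'\<in>UNIV. \<forall>w\<in>hbelow k. \<forall>n. YM k (u + u') w n = YM k u w n + YM k u' w n"
  proof (intro ballI allI)
    fix u u' :: 'v and w n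
    have "hvac (u + u') = hvac u + hvac u'" by (auto simp: hvac_def fun_eq_iff)
    then show "YM k (u + u') w n = YM k u w n + YM k u' w n" by (simp add: YM_def YW_addl trunc_add)
  qed
  have c3: "\<forall>c. \<forall>u\<in>UNIV. \<forall>w\<in>hbelow k. \<forall>n. YM k (sc0V c u) w n = pscale sc0W c (YM k u w n)"
  proof (intro ballI allI)
    fix c u w n
    have "hvac (sc0V c u) = hact sc0V (\<lambda>i. if i = 0 then c else 0) (hvac u)"
      unfolding V.hact_const by (auto simp: hvac_def fun_eq_iff pscale_def)
    then show "YM k (sc0V c u) w n = pscale sc0W c (YM k u w n)"
      by (simp add: YM_def YW_hactl W.hact_const W.trunc_pscale)
  qed
  have c4: "\<forall>u\<in>UNIV. \<forall>w\<in>hbelow k. \<forall>w'\<in>hbelow k. \<forall>n. YM k u (w + w') n = YM k u w n + YM k u w' n"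
    by (simp add: YM_def YW_addr trunc_add)
  have c5: "\<forall>c. \<forall>u\<in>UNIV. \<forall>w\<in>hbelow k. \<forall>n. YM k u (pscale sc0W c w) n = pscale sc0W c (YM k u w n)"
  proof (intro ballI allI)
    fix c u w n
    have "YW (hvac u) (pscale sc0W c w) n = pscale sc0W c (YW (hvac u) w n)"
      using YW_hactr[of "hvac u" "\<lambda>i. if i = 0 then c else 0" w n] by (simp only: W.hact_const)
    then show "YM k u (pscale sc0W c w) n = pscale sc0W c (YM k u w n)"
      by (simp add: YM_def W.trunc_pscale)
  qed
  have c6: "\<forall>u\<in>UNIV. \<forall>w\<in>hbelow k. \<exists>N. \<forall>n\<ge>N. YM k u w n = 0"
  proof (intro ballI)
    fix u :: 'v and w :: "nat \<Rightarrow> 'w" assume w: "w \<in> hbelow k"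
    have "?e u \<in> hbelow k" by simp
    moreover have "\<forall>u\<in>hbelow k. \<forall>w\<in>hbelow k. \<exists>N. \<forall>n\<ge>N. ?YL u w n = 0"
      using L unfolding nlva_module_def by blast
    ultimately obtain N where "\<forall>n\<ge>N. ?YL (?e u) w n = 0" using w by blast
    then show "\<exists>N. \<forall>n\<ge>N. YM k u w n = 0" using YMe by metis
  qed
  have c7: "\<forall>w\<in>hbelow k. \<forall>n. YM k vac0 w n = (if n = -1 then w else 0)"
    using L YMe unfolding nlva_module_def by simp
  have c8: "\<forall>u\<in>UNIV. \<forall>v\<in>UNIV. \<forall>w\<in>hbelow k. \<exists>l. \<forall>p q.
         wa_lhs (pscale sc0W) (YM k) u v w l p q = wa_rhs (pscale sc0W) Y0 (YM k) u v w l p q"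
  proof (intro ballI)
    fix u v :: 'v and w :: "nat \<Rightarrow> 'w" assume w: "w \<in> hbelow k"
    have "\<forall>u\<in>hbelow k. \<forall>v\<in>hbelow k. \<forall>w\<in>hbelow k. \<exists>l. \<forall>p q. wa_lhs (pscale sc0W) ?YL u v w l p q
       = wa_rhs (pscale sc0W) (\<lambda>u v n. trunc k (hYV Y0 u v n)) ?YL u v w l p q"
      using L unfolding nlva_module_def by blast
    then obtain l where l: "\<forall>p q. wa_lhs (pscale sc0W) ?YL (?e u) (?e v) w l p q
       = wa_rhs (pscale sc0W) (\<lambda>u v n. trunc k (hYV Y0 u v n)) ?YL (?e u) (?e v) w l p q"
      using w trunc_in_hbelow by blast
    show "\<exists>l. \<forall>p q. wa_lhs (pscale sc0W) (YM k) u v w l p q = wa_rhs (pscale sc0W) Y0 (YM k) u v w l p q"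
    proof (intro exI allI)
      fix p q
      show "wa_lhs (pscale sc0W) (YM k) u v w l p q = wa_rhs (pscale sc0W) Y0 (YM k) u v w l p q"
        using l[rule_format, of p q] by (simp add: wa_lhs_def wa_rhs_def YMe hYV_hvac)
    qed
  qed
  show ?thesis unfolding nlva_module_def using sub c1 c2 c3 c4 c5 c6 c7 c8 by simp
qed

end

definition ssum :: "'a::plus set \<Rightarrow> 'a set \<Rightarrow> 'a set" where
  "ssum A B = {a + b | a b. a \<in> A \<and> b \<in> B}"

lemma lsub_0: "lsubspace sc A \<Longrightarrow> 0 \<in> A" by (simp add: lsubspace_def)
lemma lsub_add: "lsubspace sc A \<Longrightarrow> a \<in> A \<Longrightarrow> b \<in> A \<Longrightarrow> a + b \<in> A" by (simp add: lsubspace_def)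
lemma lsub_sc: "lsubspace sc A \<Longrightarrow> a \<in> A \<Longrightarrow> sc c a \<in> A" by (simp add: lsubspace_def)
lemma lsub_int: "lsubspace sc A \<Longrightarrow> lsubspace sc B \<Longrightarrow> lsubspace sc (A \<inter> B)"
  by (simp add: lsubspace_def)

lemma ssum_mono_closed:
  assumes "\<And>a b. F (a + b) = F a + F b" "\<And>a. a \<in> A \<Longrightarrow> F a \<in> A" "\<And>b. b \<in> B \<Longrightarrow> F b \<in> B"
    and "x \<in> ssum A B"
  shows "F x \<in> ssum A B"
proof -
  obtain a b where "x = a + b" "a \<in> A" "b \<in> B" using assms(4) unfolding ssum_def by blast
  then have "F x = F a + F b" "F a \<in> A" "F b \<in> B" using assms(1-3) by auto
  then show ?thesis unfolding ssum_def by blast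
qed

lemma lsub_ssum:
  assumes "lsubspace sc A" "lsubspace sc B" "\<And>c a b. sc c (a + b) = sc c a + sc c (b::'a::ab_group_add)"
  shows "lsubspace sc (ssum A B)"
proof -
  have "0 \<in> A" "0 \<in> B" using assms unfolding lsubspace_def by auto
  then have "(0::'a) + 0 \<in> ssum A B" unfolding ssum_def by blast
  then have "0 \<in> ssum A B" by simp
  moreover have "\<forall>a\<in>ssum A B. \<forall>b\<in>ssum A B. a + b \<in> ssum A B"
  proof (intro ballI)
    fix x y assume "x \<in> ssum A B" "y \<in> ssum A B"
    then obtain a b a' b' where "x = a + b" "y = a' + b'" "a \<in> A" "b \<in> B" "a' \<in> A" "b' \<in> B"
      unfolding ssum_def by blast
    moreover have "x + y = (a + a') + (b + b')" using calculation by (simp add: algebra_simps)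
    ultimately show "x + y \<in> ssum A B" using assms unfolding ssum_def lsubspace_def by blast
  qed
  moreover have "\<forall>c. \<forall>x\<in>ssum A B. sc c x \<in> ssum A B"
  proof (intro allI ballI)
    fix c x assume "x \<in> ssum A B"
    then obtain a b where "x = a + b" "a \<in> A" "b \<in> B" unfolding ssum_def by blast
    moreover have "sc c a \<in> A" "sc c b \<in> B" using calculation assms(1,2) unfolding lsubspace_def by auto
    ultimately show "sc c x \<in> ssum A B" unfolding ssum_def using assms(3) by blast
  qed
  ultimately show ?thesis by (simp add: lsubspace_def)
qed

context cmod begin
lemma lsub_diff: "lsubspace (pscale sc) A \<Longrightarrow> a \<in> A \<Longrightarrow> b \<in> A \<Longrightarrow> a - b \<in> A"
  using lsub_add[of "pscale sc" A a "pscale sc (-1) b"] lsub_sc[of "pscale sc" A b "-1"]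
  by (simp add: pscale_minus1)
lemma lsub_ssum': "lsubspace (pscale sc) A \<Longrightarrow> lsubspace (pscale sc) B \<Longrightarrow> lsubspace (pscale sc) (ssum A B)"
  by (rule lsub_ssum) (auto simp: pscale_add)
lemma hact_pscale: "hact sc f (pscale sc c x) = pscale sc c (hact sc f x)"
  by (auto simp: hact_def pscale_def fun_eq_iff scale_sum_right mult.commute)
end

locale ctx1 = ctx sc0W sc0V Y0 vac0 YW
  for sc0W :: "complex \<Rightarrow> 'w::ab_group_add \<Rightarrow> 'w" and sc0V :: "complex \<Rightarrow> 'v::ab_group_add \<Rightarrow> 'v"
  and Y0 vac0 YW +
  fixes W1 :: "(nat \<Rightarrow> 'w) set"
  assumes W1: "hsubmodule sc0W YW W1"
begin

definition G :: "nat \<Rightarrow> (nat \<Rightarrow> complex) \<Rightarrow> (nat \<Rightarrow> 'w) \<Rightarrow> (nat \<Rightarrow> 'w)" where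
  "G k f x = trunc k (hact sc0W f x)"
definition d1 :: "nat \<Rightarrow> complex" where "d1 = (\<lambda>i. if i = 1 then 1 else 0)"
definition N :: "nat \<Rightarrow> (nat \<Rightarrow> 'w) set" where "N k = trunc k ` W1"
definition good :: "nat \<Rightarrow> (nat \<Rightarrow> 'w) set \<Rightarrow> bool" where
  "good k C \<longleftrightarrow> C \<subseteq> hbelow k \<and> lsubspace (pscale sc0W) C \<and> (\<forall>u. \<forall>w\<in>C. \<forall>m. YM k u w m \<in> C) \<and>
     (\<forall>f. \<forall>x\<in>C. G k f x \<in> C) \<and> N k \<inter> C = {0} \<and> hbelow k = ssum (N k) C"

lemma G_YM: "YM k u (G k f x) m = G k f (YM k u x m)"
proof -
  have "YM k u (G k f x) m = trunc k (YW (hvac u) (hact sc0W f x) m)"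
    unfolding YM_def G_def using YW_trunc_r[of k "hvac u" "hact sc0W f x" m] by simp
  also have "\<dots> = trunc k (hact sc0W f (YW (hvac u) x m))" by (simp only: YW_hactr)
  also have "\<dots> = G k f (YM k u x m)" unfolding G_def YM_def by (rule W.trunc_hact)
  finally show ?thesis .
qed
lemma G_add: "G k f (a + b) = G k f a + G k f b"
  by (simp add: G_def W.hact_add trunc_add)
lemma G_pscale: "G k f (pscale sc0W c x) = pscale sc0W c (G k f x)"
  by (simp add: G_def W.hact_pscale W.trunc_pscale)
lemma trunc_G: "k \<le> n \<Longrightarrow> trunc k (G n f x) = G k f (trunc k x)"
  unfolding G_def by (simp add: trunc_trunc W.trunc_hact[of k f x, symmetric])
lemma trunc_YM: "k \<le> n \<Longrightarrow> trunc k (YM n u x m) = YM k u (trunc k x) m"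
  unfolding YM_def by (simp add: trunc_trunc YW_trunc_r[of k _ x, symmetric])
lemma YM_add: "YM k u (a + b) m = YM k u a m + YM k u b m"
  by (simp add: YM_def YW_addr trunc_add)
lemma G_hb[simp]: "G k f x \<in> hbelow k" by (simp add: G_def)
lemma YM_hb[simp]: "YM k u x m \<in> hbelow k" by (simp add: YM_def)
lemma G_split: "x \<in> hbelow n \<Longrightarrow> G n f x = pscale sc0W (f 0) x + G n d1 (G n (\<lambda>i. f (Suc i)) x)"
  unfolding G_def d1_def by (rule W.hact_split)

lemma hbelow_sub: "lsubspace (pscale sc0W) (hbelow k)"
  using YM_module[of k] by (simp add: nlva_module_def)

lemma W1_0: "0 \<in> W1" using W1 by (simp add: hsubmodule_def)
lemma W1_add: "a \<in> W1 \<Longrightarrow> b \<in> W1 \<Longrightarrow> a + b \<in> W1" using W1 by (simp add: hsubmodule_def)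
lemma W1_hact: "a \<in> W1 \<Longrightarrow> hact sc0W f a \<in> W1" using W1 by (simp add: hsubmodule_def)
lemma W1_YW: "a \<in> W1 \<Longrightarrow> YW u a n \<in> W1" using W1 by (simp add: hsubmodule_def)
lemma W1_clos: "hclosure W1 = W1" using W1 by (simp add: hsubmodule_def)
lemma W1_sat: "hsat W1 = W1" using W1 by (simp add: hsubmodule_def)

lemma N_sub: "lsubspace (pscale sc0W) (N k)"
  unfolding lsubspace_def N_def
proof (intro conjI ballI allI)
  show "0 \<in> trunc k ` W1" using W1_0 by force
next
  fix a b assume "a \<in> trunc k ` W1" "b \<in> trunc k ` W1"
  then show "a + b \<in> trunc k ` W1" using W1_add by (auto simp: trunc_add[symmetric])
next
  fix c a assume "a \<in> trunc k ` W1"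
  then obtain w where "w \<in> W1" "a = trunc k w" by blast
  then show "pscale sc0W c a \<in> trunc k ` W1"
    using W1_hact[of w "\<lambda>i. if i = 0 then c else 0"] by (auto simp: W.hact_const W.trunc_pscale[symmetric])
qed
lemma N_hb: "N k \<subseteq> hbelow k" by (auto simp: N_def)
lemma N_YM: "x \<in> N k \<Longrightarrow> YM k u x m \<in> N k"
proof -
  assume "x \<in> N k"
  then obtain w where w: "w \<in> W1" "x = trunc k w" by (auto simp: N_def)
  have "YM k u x m = trunc k (YW (hvac u) w m)" unfolding YM_def w(2) by (rule YW_trunc_r[symmetric])
  then show ?thesis using W1_YW[OF w(1)] by (auto simp: N_def)
qed
lemma N_G: "x \<in> N k \<Longrightarrow> G k f x \<in> N k"
proof -
  assume "x \<in> N k"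
  then obtain w where w: "w \<in> W1" "x = trunc k w" by (auto simp: N_def)
  have "G k f x = trunc k (hact sc0W f w)" unfolding G_def w(2) by (rule W.trunc_hact[symmetric])
  then show ?thesis using W1_hact[OF w(1)] by (auto simp: N_def)
qed
lemma N_trunc: "k \<le> n \<Longrightarrow> x \<in> N n \<Longrightarrow> trunc k x \<in> N k"
  unfolding N_def by (auto simp: trunc_trunc)

lemma N_pure:
  assumes "G (Suc k) d1 d \<in> N (Suc k)"
  shows "trunc k d \<in> N k"
proof -
  obtain w1 where w1: "w1 \<in> W1" "G (Suc k) d1 d = trunc (Suc k) w1" using assms by (auto simp: N_def)
  have Gd: "G (Suc k) d1 d = trunc (Suc k) (hpow 1 d)" by (simp add: G_def d1_def W.hact_delta)
  have "trunc (Suc k) (hpow 1 d) 0 = trunc (Suc k) w1 0" using w1(2) Gd by simp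
  then have w10: "w1 0 = 0" by (simp add: trunc_def hpow_def)
  let ?w' = "\<lambda>i. w1 (Suc i)"
  have "hpow 1 ?w' = w1"
  proof
    fix i show "hpow 1 ?w' i = w1 i" using w10 by (cases i) (auto simp: hpow_def)
  qed
  then have "?w' \<in> hsat W1" using w1 by (auto simp: hsat_def)
  then have w'W: "?w' \<in> W1" using W1_sat by simp
  have "trunc k d = trunc k ?w'"
  proof
    fix i
    show "trunc k d i = trunc k ?w' i"
    proof (cases "i < k")
      case True
      have "trunc (Suc k) (hpow 1 d) (Suc i) = trunc (Suc k) w1 (Suc i)" using w1(2) Gd by simp
      then show ?thesis using True by (simp add: trunc_def hpow_def)
    qed (simp add: trunc_def)
  qed
  then show ?thesis using w'W by (auto simp: N_def)
qed


lemma lift: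
  assumes gC: "good k C"
  shows "\<exists>C'. good (Suc k) C' \<and> trunc k ` C' \<subseteq> C"
proof -
  let ?n = "Suc k"
  have kn: "k \<le> ?n" by simp
  have C_sub: "lsubspace (pscale sc0W) C" and C_hb: "C \<subseteq> hbelow k"
    and C_YM: "\<And>u w m. w \<in> C \<Longrightarrow> YM k u w m \<in> C" and C_G: "\<And>f x. x \<in> C \<Longrightarrow> G k f x \<in> C"
    and C_N: "N k \<inter> C = {0}" and C_span: "hbelow k = ssum (N k) C"
    using gC unfolding good_def by auto
  define D where "D = {x \<in> hbelow ?n. trunc k x \<in> C}"
  define T where "T = {x \<in> N ?n. trunc k x = 0}"
  define HD where "HD = G ?n d1 ` D"
  define S where "S = ssum T HD"
  have D_sub: "lsubspace (pscale sc0W) D"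
    unfolding lsubspace_def
  proof (intro conjI ballI allI)
    show "0 \<in> D" using lsub_0[OF hbelow_sub] lsub_0[OF C_sub] by (simp add: D_def)
  next
    fix a b assume "a \<in> D" "b \<in> D"
    then show "a + b \<in> D" using lsub_add[OF hbelow_sub] lsub_add[OF C_sub] by (simp add: D_def trunc_add)
  next
    fix c a assume "a \<in> D"
    then show "pscale sc0W c a \<in> D" using lsub_sc[OF hbelow_sub] lsub_sc[OF C_sub] by (simp add: D_def W.trunc_pscale)
  qed
  have D_YM: "x \<in> D \<Longrightarrow> YM ?n u x m \<in> D" for x u m
    unfolding D_def using trunc_YM[OF kn] C_YM by auto
  have D_G: "x \<in> D \<Longrightarrow> G ?n f x \<in> D" for x f
    unfolding D_def using trunc_G[OF kn] C_G by auto
  have D_hb: "D \<subseteq> hbelow ?n" by (auto simp: D_def)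
  have T_sub: "lsubspace (pscale sc0W) T"
    unfolding lsubspace_def
  proof (intro conjI ballI allI)
    show "0 \<in> T" using lsub_0[OF N_sub] by (simp add: T_def)
  next
    fix a b assume "a \<in> T" "b \<in> T"
    then show "a + b \<in> T" using lsub_add[OF N_sub] by (simp add: T_def trunc_add)
  next
    fix c a assume "a \<in> T"
    then show "pscale sc0W c a \<in> T" using lsub_sc[OF N_sub] by (simp add: T_def W.trunc_pscale)
  qed
  have T_YM: "x \<in> T \<Longrightarrow> YM ?n u x m \<in> T" for x u m
  proof -
    assume x: "x \<in> T"
    have "trunc k (YM ?n u x m) = YM k u (trunc k x) m" by (rule trunc_YM[OF kn])
    also have "\<dots> = 0" using x by (simp add: T_def YM_def)
    finally show ?thesis using x N_YM by (auto simp: T_def)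
  qed
  have T_D: "T \<subseteq> D" unfolding T_def D_def using N_hb[of ?n] lsub_0[OF C_sub] by auto
  have T_N: "T \<subseteq> N ?n" unfolding T_def by auto
  have HD_sub: "lsubspace (pscale sc0W) HD"
    unfolding lsubspace_def
  proof (intro conjI ballI allI)
    have "G ?n d1 0 = 0" using G_add[of ?n d1 0 0] by simp
    then show "0 \<in> HD" unfolding HD_def using lsub_0[OF D_sub] by (metis image_eqI)
  next
    fix a b assume "a \<in> HD" "b \<in> HD"
    then obtain x y where "x \<in> D" "y \<in> D" "a = G ?n d1 x" "b = G ?n d1 y" unfolding HD_def by blast
    moreover have "a + b = G ?n d1 (x + y)" using calculation by (simp add: G_add)
    ultimately show "a + b \<in> HD" unfolding HD_def using lsub_add[OF D_sub] by blast
  next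
    fix c a assume "a \<in> HD"
    then obtain x where "x \<in> D" "a = G ?n d1 x" unfolding HD_def by blast
    moreover have "pscale sc0W c a = G ?n d1 (pscale sc0W c x)" using calculation by (simp add: G_pscale)
    ultimately show "pscale sc0W c a \<in> HD" unfolding HD_def using lsub_sc[OF D_sub] by blast
  qed
  have HD_YM: "x \<in> HD \<Longrightarrow> YM ?n u x m \<in> HD" for x u m
    unfolding HD_def using D_YM by (auto simp: G_YM)
  have HD_D: "HD \<subseteq> D" unfolding HD_def using D_G by auto
  have S_sub: "lsubspace (pscale sc0W) S" unfolding S_def by (rule W.lsub_ssum'[OF T_sub HD_sub])
  have S_YM: "x \<in> S \<Longrightarrow> YM ?n u x m \<in> S" for x u m
    unfolding S_def
    by (rule ssum_mono_closed[where F = "\<lambda>x. YM ?n u x m"]) (auto simp: YM_add T_YM HD_YM)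
  have S_D: "S \<subseteq> D" unfolding S_def ssum_def using T_D HD_D lsub_add[OF D_sub] by blast
  have S_hb: "S \<subseteq> hbelow ?n" using S_D D_hb by blast
  have Ssm: "nlva_submodule (pscale sc0W) UNIV (YM ?n) (hbelow ?n) S"
    unfolding nlva_submodule_def using S_sub S_hb S_YM by auto
  have "completely_reducible (pscale sc0W) UNIV (YM ?n) (hbelow ?n)"
    by (rule cr[rule_format, OF YM_module])
  then have "\<exists>W2. nlva_submodule (pscale sc0W) UNIV (YM ?n) (hbelow ?n) W2 \<and> S \<inter> W2 = {0} \<and>
              hbelow ?n = {a + b | a b. a \<in> S \<and> b \<in> W2}"
    unfolding completely_reducible_def using Ssm by blast
  then obtain R where R: "nlva_submodule (pscale sc0W) UNIV (YM ?n) (hbelow ?n) R"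
    "S \<inter> R = {0}" "hbelow ?n = ssum S R"
    unfolding ssum_def by blast
  have R_sub: "lsubspace (pscale sc0W) R" and R_YM: "\<And>x u m. x \<in> R \<Longrightarrow> YM ?n u x m \<in> R"
    using R(1) unfolding nlva_submodule_def by auto
  define C' where "C' = ssum HD (R \<inter> D)"
  have C'_D: "C' \<subseteq> D" unfolding C'_def ssum_def using HD_D lsub_add[OF D_sub] by blast
  have C'_sub: "lsubspace (pscale sc0W) C'" unfolding C'_def
    by (rule W.lsub_ssum'[OF HD_sub lsub_int[OF R_sub D_sub]])
  have C'_YM: "x \<in> C' \<Longrightarrow> YM ?n u x m \<in> C'" for x u m
    unfolding C'_def
    by (rule ssum_mono_closed[where F = "\<lambda>x. YM ?n u x m"]) (auto simp: YM_add HD_YM R_YM D_YM)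
  have C'_G: "x \<in> C' \<Longrightarrow> G ?n f x \<in> C'" for x f
  proof -
    assume x: "x \<in> C'"
    then have xD: "x \<in> D" using C'_D by blast
    then have xh: "x \<in> hbelow ?n" using D_hb by blast
    have "G ?n d1 (G ?n (\<lambda>i. f (Suc i)) x) \<in> HD" unfolding HD_def using D_G[OF xD] by blast
    moreover have "(0::nat\<Rightarrow>'w) \<in> R \<inter> D" using lsub_0[OF lsub_int[OF R_sub D_sub]] .
    ultimately have "G ?n d1 (G ?n (\<lambda>i. f (Suc i)) x) + 0 \<in> C'"
      unfolding C'_def ssum_def by blast
    then have "G ?n d1 (G ?n (\<lambda>i. f (Suc i)) x) \<in> C'" by simp
    moreover have "pscale sc0W (f 0) x \<in> C'" using lsub_sc[OF C'_sub x] .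
    ultimately show ?thesis using G_split[OF xh, of f] lsub_add[OF C'_sub] by simp
  qed
  have TH: "T \<inter> HD \<subseteq> {0}"
  proof
    fix a assume a: "a \<in> T \<inter> HD"
    then obtain d where d: "d \<in> D" "a = G ?n d1 d" unfolding HD_def by blast
    have "trunc k d \<in> N k" using N_pure a d by (auto simp: T_def)
    moreover have "trunc k d \<in> C" using d by (auto simp: D_def)
    ultimately have td: "trunc k d = 0" using C_N by blast
    have "a = 0"
    proof
      fix i
      show "a i = 0 i"
      proof (cases "i < ?n")
        case True
        have "a i = trunc ?n (hpow 1 d) i" using d(2) by (simp add: G_def d1_def W.hact_delta)
        also have "\<dots> = 0"
        proof (cases i)
          case (Suc j)
          then have "j < k" using True by simp
          then have "trunc k d j = d j" by (simp add: trunc_def)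
          then have "d j = 0" using td by simp
          then show ?thesis using True Suc by (simp add: trunc_def hpow_def)
        qed (simp add: trunc_def hpow_def)
        finally show ?thesis by simp
      next
        case False
        then show ?thesis using d(2) by (simp add: G_def trunc_def)
      qed
    qed
    then show "a \<in> {0}" by simp
  qed
  have C'_N: "N ?n \<inter> C' = {0}"
  proof
    show "{0} \<subseteq> N ?n \<inter> C'" using lsub_0[OF N_sub] lsub_0[OF C'_sub] by blast
  next
    show "N ?n \<inter> C' \<subseteq> {0}"
    proof
      fix y assume y: "y \<in> N ?n \<inter> C'"
      then have "trunc k y \<in> N k" using N_trunc[OF kn] by blast
      moreover have "trunc k y \<in> C" using y C'_D by (auto simp: D_def)
      ultimately have "trunc k y = 0" using C_N by blast
      then have yT: "y \<in> T" using y by (auto simp: T_def)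
      obtain a r where ar: "y = a + r" "a \<in> HD" "r \<in> R" "r \<in> D" using y unfolding C'_def ssum_def by blast
      have "r = y - a" using ar by simp
      moreover have "y - a \<in> S"
      proof -
        have "pscale sc0W (-1) a \<in> HD" using lsub_sc[OF HD_sub ar(2)] .
        then have "y + pscale sc0W (-1) a \<in> S" unfolding S_def ssum_def using yT by blast
        then show ?thesis by (simp add: W.pscale_minus1)
      qed
      ultimately have "r \<in> S \<inter> R" using ar by simp
      then have "r = 0" using R(2) by blast
      then have "y \<in> T \<inter> HD" using ar yT by simp
      then show "y \<in> {0}" using TH by blast
    qed
  qed
  have C'_span: "hbelow ?n = ssum (N ?n) C'"
  proof
    show "ssum (N ?n) C' \<subseteq> hbelow ?n"
      unfolding ssum_def using N_hb[of ?n] C'_D D_hb lsub_add[OF hbelow_sub] by blast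
  next
    show "hbelow ?n \<subseteq> ssum (N ?n) C'"
    proof
      fix x :: "nat \<Rightarrow> 'w" assume x: "x \<in> hbelow ?n"
      have "trunc k x \<in> hbelow k" by simp
      then obtain a c where ac: "trunc k x = a + c" "a \<in> N k" "c \<in> C" using C_span unfolding ssum_def by blast
      obtain w1 where w1: "w1 \<in> W1" "a = trunc k w1" using ac(2) by (auto simp: N_def)
      let ?y = "trunc ?n w1"
      have yN: "?y \<in> N ?n" using w1 by (auto simp: N_def)
      have "trunc k (x - ?y) = c" using ac w1 by (simp add: trunc_diff trunc_trunc)
      moreover have "x - ?y \<in> hbelow ?n" using W.lsub_diff[OF hbelow_sub x] N_hb yN by blast
      ultimately have xyD: "x - ?y \<in> D" using ac(3) by (simp add: D_def)
      then obtain s r where sr: "x - ?y = s + r" "s \<in> S" "r \<in> R" using R(3) D_hb unfolding ssum_def by blast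
      have "r = (x - ?y) - s" using sr by simp
      moreover have "s \<in> D" using sr S_D by blast
      ultimately have rD: "r \<in> D" using W.lsub_diff[OF D_sub xyD] by simp
      obtain t b where tb: "s = t + b" "t \<in> T" "b \<in> HD" using sr(2) unfolding S_def ssum_def by blast
      have "b + r \<in> C'" unfolding C'_def ssum_def using tb rD sr by blast
      moreover have "?y + t \<in> N ?n" using lsub_add[OF N_sub yN] tb T_N by blast
      moreover have "x = (?y + t) + (b + r)" using sr tb by (simp add: algebra_simps)
      ultimately show "x \<in> ssum (N ?n) C'" unfolding ssum_def by blast
    qed
  qed
  have "good ?n C'" unfolding good_def
    using C'_D D_hb C'_sub C'_YM C'_G C'_N C'_span by blast
  moreover have "trunc k ` C' \<subseteq> C" using C'_D by (auto simp: D_def)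
  ultimately show ?thesis by blast
qed


lemma good0: "good 0 {0}"
proof -
  have N0: "N 0 = {0}" using W1_0 by (auto simp: N_def)
  have "lsubspace (pscale sc0W) {0}" by (simp add: lsubspace_def)
  moreover have "ssum {0::nat\<Rightarrow>'w} {0} = {0}" by (auto simp: ssum_def)
  ultimately show ?thesis unfolding good_def N0 hbelow_0 by (simp add: YM_def G_def)
qed

lemma good_gen:
  assumes g: "good k C" and x: "x \<in> C"
  shows "trunc k (YW u x m) \<in> C"
proof -
  have C_sub: "lsubspace (pscale sc0W) C" and C_YM: "\<And>u w m. w \<in> C \<Longrightarrow> YM k u w m \<in> C"
    and C_G: "\<And>f x. x \<in> C \<Longrightarrow> G k f x \<in> C"
    using g unfolding good_def by auto
  have "trunc k (YW (trunc j u) x m) \<in> C" for j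
  proof (induction j)
    case 0
    then show ?case using lsub_0[OF C_sub] by (simp only: trunc_0 YW_0l trunc_zero)
  next
    case (Suc j)
    have tu: "trunc (Suc j) u = trunc j u + hact sc0V (\<lambda>i. if i = j then 1 else 0) (hvac (u j))"
      unfolding V.hact_delta by (auto simp: fun_eq_iff trunc_def hpow_def hvac_def less_Suc_eq)
    have "trunc k (YW (trunc (Suc j) u) x m) = trunc k (YW (trunc j u) x m) +
        trunc k (hact sc0W (\<lambda>i. if i = j then 1 else 0) (YW (hvac (u j)) x m))"
      unfolding tu by (simp add: YW_addl YW_hactl trunc_add)
    also have "trunc k (hact sc0W (\<lambda>i. if i = j then 1 else 0) (YW (hvac (u j)) x m)) =
        G k (\<lambda>i. if i = j then 1 else 0) (YM k (u j) x m)"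
      unfolding G_def YM_def by (rule W.trunc_hact)
    finally have e: "trunc k (YW (trunc (Suc j) u) x m) = trunc k (YW (trunc j u) x m) +
        G k (\<lambda>i. if i = j then 1 else 0) (YM k (u j) x m)" .
    show ?case unfolding e by (rule lsub_add[OF C_sub Suc.IH C_G[OF C_YM[OF x]]])
  qed
  then show ?thesis using YW_trunc_l by metis
qed

end

primrec chainC :: "(nat \<Rightarrow> 'a set \<Rightarrow> 'a set \<Rightarrow> bool) \<Rightarrow> 'a set \<Rightarrow> nat \<Rightarrow> 'a set" where
  "chainC P c0 0 = c0"
| "chainC P c0 (Suc k) = (SOME C'. P k (chainC P c0 k) C')"

context ctx1 begin

definition Cs :: "nat \<Rightarrow> (nat \<Rightarrow> 'w) set" where
  "Cs = chainC (\<lambda>k C C'. good (Suc k) C' \<and> trunc k ` C' \<subseteq> C) {0}"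

lemma Cs_good: "good k (Cs k) \<and> trunc k ` Cs (Suc k) \<subseteq> Cs k"
proof (induction k)
  case 0
  have "\<exists>C'. good (Suc 0) C' \<and> trunc 0 ` C' \<subseteq> {0}" using lift[OF good0] .
  then have "good (Suc 0) (Cs (Suc 0)) \<and> trunc 0 ` Cs (Suc 0) \<subseteq> Cs 0"
    unfolding Cs_def chainC.simps by (rule someI_ex)
  then show ?case using good0 unfolding Cs_def chainC.simps(1) by blast
next
  case (Suc k)
  have gS: "good (Suc k) (Cs (Suc k))" using Suc by (simp add: Cs_def) (metis (no_types, lifting) Cs_def chainC.simps(2) lift someI_ex)
  have "\<exists>C'. good (Suc (Suc k)) C' \<and> trunc (Suc k) ` C' \<subseteq> Cs (Suc k)" using lift[OF gS] .
  then have "good (Suc (Suc k)) (Cs (Suc (Suc k))) \<and> trunc (Suc k) ` Cs (Suc (Suc k)) \<subseteq> Cs (Suc k)"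
    unfolding Cs_def chainC.simps by (rule someI_ex)
  then show ?case using gS by simp
qed


lemma Cs_compat: "k \<le> j \<Longrightarrow> x \<in> Cs j \<Longrightarrow> trunc k x \<in> Cs k"
proof (induction j arbitrary: x rule: dec_induct)
  case base
  have "Cs k \<subseteq> hbelow k" using Cs_good[of k] unfolding good_def by blast
  then have "trunc k x = x" using base hbelow_iff by blast
  then show ?case using base by simp
next
  case (step j)
  have "trunc j x \<in> Cs j" using Cs_good[of j] step.prems by blast
  then have "trunc k (trunc j x) \<in> Cs k" using step.IH by blast
  then show ?case using step.hyps trunc_trunc by metis
qed

lemma Cs_sub: "lsubspace (pscale sc0W) (Cs k)" using Cs_good[of k] by (simp add: good_def)
lemma Cs_G: "x \<in> Cs k \<Longrightarrow> G k f x \<in> Cs k" using Cs_good[of k] by (simp add: good_def)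
lemma Cs_N: "N k \<inter> Cs k = {0}" using Cs_good[of k] by (simp add: good_def)
lemma Cs_span: "hbelow k = ssum (N k) (Cs k)" using Cs_good[of k] by (simp add: good_def)

definition W2 where "W2 = {w. \<forall>k. trunc k w \<in> Cs k}"

lemma W2_0: "0 \<in> W2" unfolding W2_def using lsub_0[OF Cs_sub] by simp
lemma W2_add: "a \<in> W2 \<Longrightarrow> b \<in> W2 \<Longrightarrow> a + b \<in> W2"
  unfolding W2_def using lsub_add[OF Cs_sub] by (simp add: trunc_add)
lemma W2_hact: "a \<in> W2 \<Longrightarrow> hact sc0W f a \<in> W2"
proof -
  assume a: "a \<in> W2"
  have "trunc k (hact sc0W f a) \<in> Cs k" for k
  proof -
    have "G k f (trunc k a) \<in> Cs k" using Cs_G a by (simp add: W2_def)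
    then show ?thesis unfolding G_def using W.trunc_hact[of k f a] by simp
  qed
  then show ?thesis by (simp add: W2_def)
qed
lemma W2_YW: "a \<in> W2 \<Longrightarrow> YW u a m \<in> W2"
proof -
  assume a: "a \<in> W2"
  have "trunc k (YW u a m) \<in> Cs k" for k
  proof -
    have "trunc k (YW u (trunc k a) m) \<in> Cs k"
      using good_gen[OF conjunct1[OF Cs_good[of k]]] a by (simp add: W2_def)
    then show ?thesis using YW_trunc_r[of k u a m] by simp
  qed
  then show ?thesis by (simp add: W2_def)
qed
lemma W2_diff: "a \<in> W2 \<Longrightarrow> b \<in> W2 \<Longrightarrow> a - b \<in> W2"
proof -
  assume a: "a \<in> W2" and b: "b \<in> W2"
  have "hact sc0W (\<lambda>i. if i = 0 then -1 else 0) b = - b" by (simp add: W.hact_const W.pscale_minus1)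
  then have "- b \<in> W2" using W2_hact[OF b] by metis
  then show ?thesis using W2_add[OF a] by (metis diff_conv_add_uminus)
qed
lemma W2_clos: "hclosure W2 = W2"
proof
  show "hclosure W2 \<subseteq> W2"
  proof
    fix w assume "w \<in> hclosure W2"
    then have "\<forall>k. \<exists>w1\<in>W2. trunc k w = trunc k w1" by (simp add: hclosure_def)
    then have "trunc k w \<in> Cs k" for k
    proof -
      assume "\<forall>k. \<exists>w1\<in>W2. trunc k w = trunc k w1"
      then obtain w1 where "w1 \<in> W2" "trunc k w = trunc k w1" by blast
      then show ?thesis by (simp add: W2_def)
    qed
    then show "w \<in> W2" by (simp add: W2_def)
  qed
  show "W2 \<subseteq> hclosure W2" unfolding hclosure_def by blast
qed

lemma W12: "W1 \<inter> W2 = {0}"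
proof
  show "{0} \<subseteq> W1 \<inter> W2" using W1_0 W2_0 by simp
  show "W1 \<inter> W2 \<subseteq> {0}"
  proof
    fix w assume w: "w \<in> W1 \<inter> W2"
    have "trunc k w = trunc k 0" for k
    proof -
      have "trunc k w \<in> N k" using w by (auto simp: N_def)
      moreover have "trunc k w \<in> Cs k" using w by (auto simp: W2_def)
      ultimately have "trunc k w \<in> N k \<inter> Cs k" by blast
      then show ?thesis using Cs_N by simp
    qed
    then have "w = 0" by (rule trunc_eq_all[rule_format])
    then show "w \<in> {0}" by simp
  qed
qed

lemma decomp_W: "\<exists>a b. a \<in> W1 \<and> b \<in> W2 \<and> w = a + b"
proof -
  define P where "P = (\<lambda>k b. b \<in> Cs k \<and> trunc k w - b \<in> N k)"
  have ex: "\<exists>b. P k b" for k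
  proof -
    have "trunc k w \<in> hbelow k" by simp
    then obtain a c where "trunc k w = a + c" "a \<in> N k" "c \<in> Cs k" using Cs_span[of k] unfolding ssum_def by blast
    then have "P k c" by (simp add: P_def)
    then show ?thesis by blast
  qed
  have uniq: "P k b \<Longrightarrow> P k b' \<Longrightarrow> b = b'" for k b b'
  proof -
    assume "P k b" "P k b'"
    then have "b - b' \<in> Cs k" "(trunc k w - b') - (trunc k w - b) \<in> N k"
      using W.lsub_diff[OF Cs_sub, of b k b'] W.lsub_diff[OF N_sub, of "trunc k w - b'" k "trunc k w - b"]
      by (simp_all add: P_def)
    moreover have "(trunc k w - b') - (trunc k w - b) = b - b'" by simp
    ultimately have "b - b' \<in> N k \<inter> Cs k" by simp
    then show "b = b'" using Cs_N by auto
  qed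
  define bs where "bs = (\<lambda>k. SOME b. P k b)"
  have Pb: "P k (bs k)" for k unfolding bs_def using ex someI_ex by metis
  have compat1: "trunc k (bs (Suc k)) = bs k" for k
  proof -
    have "trunc k (bs (Suc k)) \<in> Cs k" using Pb[of "Suc k"] Cs_compat[of k "Suc k"] by (auto simp: P_def)
    moreover have "trunc k w - trunc k (bs (Suc k)) \<in> N k"
      using N_trunc[of k "Suc k" "trunc (Suc k) w - bs (Suc k)"] Pb[of "Suc k"]
      by (auto simp: P_def trunc_diff trunc_trunc)
    ultimately show ?thesis using uniq Pb by (auto simp: P_def)
  qed
  have compat: "k \<le> j \<Longrightarrow> trunc k (bs j) = bs k" for k j
  proof (induction j rule: dec_induct)
    case base
    have "bs k \<in> hbelow k" using Pb[of k] Cs_good[of k] by (auto simp: P_def good_def)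
    then show ?case by (simp add: hbelow_iff)
  next
    case (step j)
    then show ?case using compat1[of j] trunc_trunc[of k j] by metis
  qed
  define b where "b = (\<lambda>i. bs (Suc i) i)"
  have tb: "trunc k b = bs k" for k
  proof
    fix i
    show "trunc k b i = bs k i"
    proof (cases "i < k")
      case True
      then have "trunc (Suc i) (bs k) = bs (Suc i)" using compat by simp
      then have "bs (Suc i) i = bs k i" by (metis lessI trunc_def)
      then show ?thesis using True by (simp add: trunc_def b_def)
    next
      case False
      have "bs k \<in> hbelow k" using Pb[of k] Cs_good[of k] by (auto simp: P_def good_def)
      then show ?thesis using False by (simp add: trunc_def hbelow_def)
    qed
  qed
  have bW2: "b \<in> W2" unfolding W2_def using tb Pb by (simp add: P_def)
  have "w - b \<in> hclosure W1"
    unfolding hclosure_def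
  proof (intro CollectI allI)
    fix k
    have "trunc k w - bs k \<in> N k" using Pb by (simp add: P_def)
    then obtain w1 where "w1 \<in> W1" "trunc k w - bs k = trunc k w1" by (auto simp: N_def)
    then show "\<exists>w1\<in>W1. trunc k (w - b) = trunc k w1" by (auto simp: trunc_diff tb)
  qed
  then have "w - b \<in> W1" using W1_clos by simp
  then show ?thesis using bW2 by (intro exI[of _ "w - b"] exI[of _ b]) simp
qed

lemma hpow_add: "hpow n (a + b) = hpow n a + hpow n (b::nat \<Rightarrow> 'w)"
  by (auto simp: hpow_def fun_eq_iff)

lemma W2_sat: "hsat W2 = W2"
proof
  show "W2 \<subseteq> hsat W2"
  proof
    fix w assume "w \<in> W2"
    then have "hpow 1 w \<in> W2" using W2_hact[of w "\<lambda>i. if i = 1 then 1 else 0"] by (simp add: W.hact_delta)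
    then show "w \<in> hsat W2" by (auto simp: hsat_def)
  qed
next
  show "hsat W2 \<subseteq> W2"
  proof
    fix w assume "w \<in> hsat W2"
    then obtain n where n: "hpow n w \<in> W2" by (auto simp: hsat_def)
    obtain a b where ab: "a \<in> W1" "b \<in> W2" "w = a + b" using decomp_W by blast
    have "hpow n a \<in> W1" using W1_hact[OF ab(1), of "\<lambda>i. if i = n then 1 else 0"] by (simp add: W.hact_delta)
    moreover have "hpow n b \<in> W2" using W2_hact[OF ab(2), of "\<lambda>i. if i = n then 1 else 0"] by (simp add: W.hact_delta)
    then have "hpow n w - hpow n b \<in> W2" using W2_diff n by blast
    moreover have "hpow n w - hpow n b = hpow n a" using ab(3) by (simp add: hpow_add)
    ultimately have "hpow n a \<in> W1 \<inter> W2" by simp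
    then have "hpow n a = 0" using W12 by blast
    then have "a = 0"
    proof -
      assume h: "hpow n a = 0"
      show "a = 0"
      proof
        fix i
        have "hpow n a (i + n) = 0" using h by simp
        then show "a i = 0 i" by (simp add: hpow_def)
      qed
    qed
    then show "w \<in> W2" using ab by simp
  qed
qed

lemma main: "\<exists>W2. hsubmodule sc0W YW W2 \<and> W1 \<inter> W2 = {0} \<and>
              (UNIV :: (nat \<Rightarrow> 'w) set) = {a + b | a b. a \<in> W1 \<and> b \<in> W2}"
proof (intro exI conjI)
  show "hsubmodule sc0W YW W2"
    unfolding hsubmodule_def using W2_0 W2_add W2_hact W2_YW W2_clos W2_sat by blast
  show "W1 \<inter> W2 = {0}" by (rule W12)
  show "UNIV = {a + b | a b. a \<in> W1 \<and> b \<in> W2}" using decomp_W by blast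
qed

end

theorem lemma3p6:
  fixes sc0V :: "complex \<Rightarrow> 'v0 \<Rightarrow> 'v0::ab_group_add"
    and Y0 :: "'v0 \<Rightarrow> 'v0 \<Rightarrow> int \<Rightarrow> 'v0"
    and vac0 :: "'v0"
    and sc0W :: "complex \<Rightarrow> 'w0 \<Rightarrow> 'w0::ab_group_add"
    and YW :: "(nat \<Rightarrow> 'v0) \<Rightarrow> (nat \<Rightarrow> 'w0) \<Rightarrow> int \<Rightarrow> (nat \<Rightarrow> 'w0)"
  assumes V0_vs: "vector_space sc0V"
    and V0_nlva: "nlva sc0V UNIV Y0 vac0"
    and W0_vs: "vector_space sc0W"
    and V0_cr: "\<forall>(M :: (nat \<Rightarrow> 'w0) set) YM.
                  nlva_module sc0V (pscale sc0W) UNIV Y0 vac0 M YM \<longrightarrow>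
                  completely_reducible (pscale sc0W) UNIV YM M"
    and W_mod: "hadic_module sc0V sc0W Y0 vac0 YW"
  shows "hadic_completely_reducible sc0W YW"
  unfolding hadic_completely_reducible_def
proof (intro allI impI)
  fix W1 assume W1: "hsubmodule sc0W YW W1"
  have mW: "module sc0W" using W0_vs by (simp add: module_iff_vector_space)
  have mV: "module sc0V" using V0_vs by (simp add: module_iff_vector_space)
  interpret c: ctx1 sc0W sc0V Y0 vac0 YW W1
    unfolding ctx1_def ctx_def ctx1_axioms_def ctx_axioms_def cmod_def
    using mW mV V0_nlva V0_cr W_mod W1 by blast
  show "\<exists>W2. hsubmodule sc0W YW W2 \<and> W1 \<inter> W2 = {0} \<and>
              (UNIV :: (nat \<Rightarrow> 'w0) set) = {a + b | a b. a \<in> W1 \<and> b \<in> W2}"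
    by (rule c.main)
qed

end
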